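(* Let $E$ be a finite set and let $\nu\colon 2^E\to\mathbb{R}\cup\{-\infty\}$ be an $\mathrm{M}^\natural$-concave function with $\nu(S)\ne-\infty$ for every $S\subseteq E$ with $|S|\le 2$. Then for any $0<q\le1$, the function \[ d(i,j)=\begin{cases}2q^{-\nu(\{i,j\})+\nu(\{i\})+\nu(\{j\})-\nu(\varnothing)}, & i\ne j,\\ 0,& i=j,\end{cases} \] is an ultrametric on $E$ of radius at most $1$, i.e. $d(i,j)\le\max\{d(i,k),d(k,j)\}$ for all $i,j,k\in E$ and $d(i,j)\le 2$ for all $i,j\in E$.
   Context: A function $\nu\colon 2^E\to\mathbb{R}\cup\{-\infty\}$ is $\mathrm{M}^\natural$-concave if for any $I_1,I_2\subseteq E$ and $i_1\in I_1\setminus I_2$, either $\nu(I_1)+\nu(I_2)\le \nu(I_1\setminus i_1)+\nu(I_2\cup i_1)$, or there is $i_2\in I_2\setminus I_1$ with $\nu(I_1)+\nu(I_2)\le \nu((I_1\setminus i_1)\cup i_2)+\nu((I_2\setminus i_2)\cup i_1)$. The radius of an ultrametric is half its diameter (maximum distance). *)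

theory Defs
  imports Complex_Main "HOL-Library.Extended_Real"
begin

text \<open>A function nu from subsets of E to the reals extended by minus infinity is
  modelled as nu :: 'a set => ereal, with the value +infinity excluded on subsets of E.\<close>

definition M_nat_concave :: "'a set \<Rightarrow> ('a set \<Rightarrow> ereal) \<Rightarrow> bool" where
  "M_nat_concave E \<nu> \<longleftrightarrow>
     (\<forall>S. S \<subseteq> E \<longrightarrow> \<nu> S \<noteq> \<infinity>) \<and>
     (\<forall>I1 I2 i1. I1 \<subseteq> E \<longrightarrow> I2 \<subseteq> E \<longrightarrow> i1 \<in> I1 - I2 \<longrightarrow>
        \<nu> I1 + \<nu> I2 \<le> \<nu> (I1 - {i1}) + \<nu> (I2 \<union> {i1}) \<or>
        (\<exists>i2 \<in> I2 - I1. \<nu> I1 + \<nu> I2 \<le> \<nu> ((I1 - {i1}) \<union> {i2}) + \<nu> ((I2 - {i2}) \<union> {i1})))"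

definition dist_nu :: "real \<Rightarrow> ('a set \<Rightarrow> ereal) \<Rightarrow> 'a \<Rightarrow> 'a \<Rightarrow> real" where
  "dist_nu q \<nu> i j =
     (if i = j then 0
      else 2 * q powr (- real_of_ereal (\<nu> {i, j}) + real_of_ereal (\<nu> {i})
                       + real_of_ereal (\<nu> {j}) - real_of_ereal (\<nu> {})))"

end

theory Submission
  imports Defs
begin

theorem lemma3p3:
  fixes E :: "'a set" and \<nu> :: "'a set \<Rightarrow> ereal" and q :: real
  assumes "finite E"
    and "M_nat_concave E \<nu>"
    and "\<And>S. S \<subseteq> E \<Longrightarrow> card S \<le> 2 \<Longrightarrow> \<nu> S \<noteq> -\<infinity>"
    and "0 < q" and "q \<le> 1"
  shows "(\<forall>i\<in>E. \<forall>j\<in>E. dist_nu q \<nu> i j = dist_nu q \<nu> j i)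
       \<and> (\<forall>i\<in>E. \<forall>j\<in>E. i \<noteq> j \<longrightarrow> dist_nu q \<nu> i j > 0)
       \<and> (\<forall>i\<in>E. dist_nu q \<nu> i i = 0)
       \<and> (\<forall>i\<in>E. \<forall>j\<in>E. \<forall>k\<in>E. dist_nu q \<nu> i j \<le> max (dist_nu q \<nu> i k) (dist_nu q \<nu> k j))
       \<and> (\<forall>i\<in>E. \<forall>j\<in>E. dist_nu q \<nu> i j \<le> 2)"
proof -
  define R where "R = (\<lambda>S. real_of_ereal (\<nu> S))"
  have conc: "\<And>I1 I2 i1. I1 \<subseteq> E \<Longrightarrow> I2 \<subseteq> E \<Longrightarrow> i1 \<in> I1 - I2 \<Longrightarrow>
        \<nu> I1 + \<nu> I2 \<le> \<nu> (I1 - {i1}) + \<nu> (I2 \<union> {i1}) \<or>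
        (\<exists>i2 \<in> I2 - I1. \<nu> I1 + \<nu> I2 \<le> \<nu> ((I1 - {i1}) \<union> {i2}) + \<nu> ((I2 - {i2}) \<union> {i1}))"
    using assms(2) unfolding M_nat_concave_def by blast
  have fin: "\<nu> S = ereal (R S)" if "S \<subseteq> E" "card S \<le> 2" for S
  proof -
    have "\<nu> S \<noteq> \<infinity>" using assms(2) that unfolding M_nat_concave_def by blast
    moreover have "\<nu> S \<noteq> -\<infinity>" using assms(3) that by blast
    ultimately show ?thesis unfolding R_def by (cases "\<nu> S") auto
  qed
  have c2: "card {a, b} \<le> 2" for a b :: 'a by (simp add: card_insert_le_m1)
  have c1: "card {a} \<le> 2" for a :: 'a by simp
  have c0: "card ({}::'a set) \<le> 2" by simp
  have fin2: "\<nu> {a, b} = ereal (R {a, b})" if "a \<in> E" "b \<in> E" for a b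
    using fin[OF _ c2] that by auto
  have fin1: "\<nu> {a} = ereal (R {a})" if "a \<in> E" for a
    using fin[OF _ c1] that by auto
  have fin0: "\<nu> {} = ereal (R {})" using fin[OF _ c0] by auto
  have L1: "R {i, j} + R {} \<le> R {i} + R {j}" if "i \<in> E" "j \<in> E" "i \<noteq> j" for i j
  proof -
    have "\<nu> {i, j} + \<nu> {} \<le> \<nu> ({i, j} - {i}) + \<nu> ({} \<union> {i})"
      using conc[of "{i,j}" "{}" i] that by auto
    moreover have "{i, j} - {i} = {j}" using that by auto
    ultimately have "\<nu> {i, j} + \<nu> {} \<le> \<nu> {j} + \<nu> {i}" by simp
    then show ?thesis using fin2[OF that(1,2)] fin1 fin0 that by simp
  qed
  have L2: "R {i, j} + R {k} \<le> max (R {i, k} + R {j}) (R {j, k} + R {i})"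
    if "i \<in> E" "j \<in> E" "k \<in> E" "i \<noteq> j" "i \<noteq> k" "j \<noteq> k" for i j k
  proof -
    have A: "{i, j} - {i} = {j}" "{k} \<union> {i} = {i, k}" "{j} \<union> {k} = {j, k}" "{k} - {k} = {}"
      "{} \<union> {i} = {i}"
      using that by auto
    have "\<nu> {i, j} + \<nu> {k} \<le> \<nu> ({i, j} - {i}) + \<nu> ({k} \<union> {i}) \<or>
        (\<exists>i2 \<in> {k} - {i, j}. \<nu> {i, j} + \<nu> {k} \<le> \<nu> (({i, j} - {i}) \<union> {i2}) + \<nu> (({k} - {i2}) \<union> {i}))"
      using conc[of "{i,j}" "{k}" i] that by auto
    moreover have "{k} - {i, j} = {k}" using that by auto
    ultimately have "\<nu> {i, j} + \<nu> {k} \<le> \<nu> {j} + \<nu> {i, k} \<or>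
        \<nu> {i, j} + \<nu> {k} \<le> \<nu> {j, k} + \<nu> {i}"
      unfolding A by (simp add: insert_commute)
    then show ?thesis using fin2 fin1 that by auto
  qed
  define a where "a = (\<lambda>i j. R {i, j} - R {i} - R {j} + R {})"
  have dn: "dist_nu q \<nu> i j = 2 * q powr (- a i j)" if "i \<noteq> j" for i j
    using that unfolding dist_nu_def a_def R_def by (simp add: algebra_simps)
  have asym: "a i j = a j i" for i j unfolding a_def by (simp add: insert_commute algebra_simps)
  have a_le: "a i j \<le> 0" if "i \<in> E" "j \<in> E" "i \<noteq> j" for i j
    using L1[OF that] unfolding a_def by simp
  have a_ult: "a i j \<le> max (a i k) (a k j)"
    if "i \<in> E" "j \<in> E" "k \<in> E" "i \<noteq> j" "i \<noteq> k" "j \<noteq> k" for i j k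
    using L2[OF that] unfolding a_def by (auto simp: insert_commute max_def)
  have pos: "dist_nu q \<nu> i j > 0" if "i \<noteq> j" for i j
    using dn[OF that] assms(4) by simp
  have nonneg: "dist_nu q \<nu> i j \<ge> 0" for i j
    using pos[of i j] by (cases "i = j") (auto simp: dist_nu_def)
  have mono: "q powr (- x) \<le> q powr (- y)" if "x \<le> y" for x y
    using powr_mono'[of "- y" "- x" q] that assms(4,5) by simp
  show ?thesis
  proof (intro conjI ballI impI)
    fix i j assume "i \<in> E" "j \<in> E"
    show "dist_nu q \<nu> i j = dist_nu q \<nu> j i"
      by (cases "i = j") (auto simp: dn asym)
  next
    fix i j assume "i \<in> E" "j \<in> E" "i \<noteq> j"
    then show "dist_nu q \<nu> i j > 0" using pos by blast
  next
    fix i show "dist_nu q \<nu> i i = 0" by (simp add: dist_nu_def)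
  next
    fix i j assume ij: "i \<in> E" "j \<in> E"
    show "dist_nu q \<nu> i j \<le> 2"
    proof (cases "i = j")
      case True then show ?thesis by (simp add: dist_nu_def)
    next
      case False
      have "q powr (- a i j) \<le> q powr 0"
        using powr_mono'[of 0 "- a i j" q] a_le[OF ij False] assms(4,5) by simp
      then show ?thesis using dn[OF False] assms(4) by simp
    qed
  next
    fix i j k assume ijk: "i \<in> E" "j \<in> E" "k \<in> E"
    show "dist_nu q \<nu> i j \<le> max (dist_nu q \<nu> i k) (dist_nu q \<nu> k j)"
    proof (cases "i = j")
      case True then show ?thesis using nonneg[of i k] by (simp add: dist_nu_def)
    next
      case ij: False
      show ?thesis
      proof (cases "k = i")
        case True then show ?thesis by simp
      next
        case ki: False
        show ?thesis
        proof (cases "k = j")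
          case True then show ?thesis by simp
        next
          case kj: False
          have "a i j \<le> a i k \<or> a i j \<le> a k j"
            using a_ult[OF ijk ij] ki kj by (auto simp: max_def split: if_splits)
          then show ?thesis
            using mono[of "a i j" "a i k"] mono[of "a i j" "a k j"] dn ij ki kj
            by (auto simp: max_def)
        qed
      qed
    qed
  qed
qed

end
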